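(* Let $i_1$ be the largest index $i\in[1,n]$ with $d_P(v_1,v_i)<d_P(v_i,v_n)$ and let $i_2$ be the smallest index $i\in[1,n]$ with $d_P(v_1,v_i)\ge|v_iv_n|$, and suppose $i_2\le i_1$. For each $i\in[i_2,i_1]$ let $j(i)$ be the smallest index $j\in[i,n]$ with $d_P(v_1,v_i)\ge |v_iv_j|+d_P(v_j,v_n)$ (this exists), and let $k(i)$ be the largest index $k\in[i,j(i)]$ with $d_P(v_1,v_i)<|v_iv_{j(i)}|+d_P(v_{j(i)},v_k)$, with $k(i)=0$ if no such $k$ exists. Then for every $i\in[i_2,i_1-1]$, $j(i+1)\le j(i)$ and $k(i+1)\le k(i)$.
   Context: Let $v_1,\dots,v_n$ be points of a metric space with metric $|\cdot|$ (symmetric, nonnegative, $|v_iv_j|=0$ iff $i=j$, triangle inequality). For $i\le j$ let $d_P(v_i,v_j)=\sum_{k=i}^{j-1}|v_kv_{k+1}|$ and $d_P(v_j,v_i)=d_P(v_i,v_j)$. *)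

theory Defs
  imports Complex_Main
begin

definition dP :: "(nat \<Rightarrow> 'a::metric_space) \<Rightarrow> nat \<Rightarrow> nat \<Rightarrow> real" where
  "dP v i j = (if i \<le> j then (\<Sum>k\<in>{i..<j}. dist (v k) (v (Suc k)))
                          else (\<Sum>k\<in>{j..<i}. dist (v k) (v (Suc k))))"

definition jfun :: "(nat \<Rightarrow> 'a::metric_space) \<Rightarrow> nat \<Rightarrow> nat \<Rightarrow> nat" where
  "jfun v n i = (LEAST j. i \<le> j \<and> j \<le> n \<and> dP v 1 i \<ge> dist (v i) (v j) + dP v j n)"

definition kfun :: "(nat \<Rightarrow> 'a::metric_space) \<Rightarrow> nat \<Rightarrow> nat \<Rightarrow> nat" where
  "kfun v n i = (let j = jfun v n i in
     if (\<exists>k. i \<le> k \<and> k \<le> j \<and> dP v 1 i < dist (v i) (v j) + dP v j k)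
     then (GREATEST k. i \<le> k \<and> k \<le> j \<and> dP v 1 i < dist (v i) (v j) + dP v j k)
     else 0)"

end

theory Submission
  imports Defs
begin

lemma dP_le: "a \<le> b \<Longrightarrow> dP v a b = (\<Sum>k\<in>{a..<b}. dist (v k) (v (Suc k)))"
  by (simp add: dP_def)

lemma dP_sym: "dP v a b = dP v b a"
  by (simp add: dP_def)

lemma dP_add: "a \<le> b \<Longrightarrow> b \<le> c \<Longrightarrow> dP v a c = dP v a b + dP v b c"
  by (simp add: dP_def sum.atLeastLessThan_concat)

lemma dP_Suc: "dP v a (Suc a) = dist (v a) (v (Suc a))"
  by (simp add: dP_def)

lemma dP_self: "dP v a a = 0"
  by (simp add: dP_def)

lemma dP_nonneg: "dP v a b \<ge> 0"
  by (simp add: dP_def sum_nonneg)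

lemma dist_le_dP: "a \<le> b \<Longrightarrow> dist (v a) (v b) \<le> dP v a b"
proof (induction b rule: dec_induct)
  case base then show ?case by (simp add: dP_self)
next
  case (step b)
  have "dist (v a) (v (Suc b)) \<le> dist (v a) (v b) + dist (v b) (v (Suc b))"
    by (rule dist_triangle)
  also have "\<dots> \<le> dP v a b + dP v b (Suc b)" using step.IH dP_Suc[of v b] by linarith
  also have "\<dots> = dP v a (Suc b)" using dP_add[of a b "Suc b" v] step.hyps(1) by simp
  finally show ?case .
qed

theorem lemma10:
  fixes v :: "nat \<Rightarrow> 'a::metric_space" and n i1 i2 :: nat
  assumes distinct: "inj_on v {1..n}"
    and i1_ex: "\<exists>i\<in>{1..n}. dP v 1 i < dP v i n"
    and i1_def: "i1 = (GREATEST i. i \<in> {1..n} \<and> dP v 1 i < dP v i n)"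
    and i2_def: "i2 = (LEAST i. i \<in> {1..n} \<and> dP v 1 i \<ge> dist (v i) (v n))"
    and le: "i2 \<le> i1"
  shows "\<forall>i\<in>{i2..<i1}. jfun v n (Suc i) \<le> jfun v n i \<and> kfun v n (Suc i) \<le> kfun v n i"
proof
  fix i assume iin: "i \<in> {i2..<i1}"
  have n1: "1 \<le> n" using i1_ex by auto
  have i1P: "i1 \<in> {1..n} \<and> dP v 1 i1 < dP v i1 n"
    unfolding i1_def
    using i1_ex by (metis (no_types, lifting) GreatestI_nat atLeastAtMost_iff)
  have i2P: "i2 \<in> {1..n} \<and> dP v 1 i2 \<ge> dist (v i2) (v n)"
    unfolding i2_def
    by (rule LeastI[of _ n]) (use n1 in \<open>auto simp: dP_nonneg\<close>)
  have ii: "i2 \<le> i" "Suc i \<le> i1" "1 \<le> i" "Suc i \<le> n" using iin i1P i2P by auto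
  have Dstep: "dP v 1 (Suc m) = dP v 1 m + dist (v m) (v (Suc m))" if "1 \<le> m" for m
    using that dP_add[of 1 m "Suc m" v] dP_Suc[of v m] by simp
  have Dn: "\<And>m. i2 \<le> m \<Longrightarrow> dist (v m) (v n) \<le> dP v 1 m"
  proof -
    fix m assume "i2 \<le> m"
    then show "dist (v m) (v n) \<le> dP v 1 m"
    proof (induction m rule: dec_induct)
      case base then show ?case using i2P by simp
    next
      case (step m)
      have "1 \<le> m" using step i2P by auto
      have "dist (v (Suc m)) (v n) \<le> dist (v (Suc m)) (v m) + dist (v m) (v n)"
        by (rule dist_triangle)
      also have "\<dots> \<le> dist (v m) (v (Suc m)) + dP v 1 m" using step.IH dist_commute[of "v (Suc m)" "v m"] by linarith
      finally show ?case using Dstep[OF \<open>1 \<le> m\<close>] by simp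
    qed
  qed
  define P where "P = (\<lambda>i j. i \<le> j \<and> j \<le> n \<and> dP v 1 i \<ge> dist (v i) (v j) + dP v j n)"
  have jf: "\<And>m. jfun v n m = (LEAST j. P m j)" by (simp add: jfun_def P_def)
  have jex: "P m (jfun v n m)" if "i2 \<le> m" "m \<le> n" for m
  proof -
    have "P m n" unfolding P_def using Dn[OF that(1)] that by (simp add: dP_self)
    then show ?thesis unfolding jf by (rule LeastI)
  qed
  define j where "j = jfun v n i"
  define j' where "j' = jfun v n (Suc i)"
  have Pj: "P i j" unfolding j_def using jex ii by auto
  have Pj': "P (Suc i) j'" unfolding j'_def using jex ii by auto
  have "j \<noteq> i"
  proof
    assume "j = i"
    then have a: "dP v 1 i \<ge> dP v i n" using Pj by (simp add: P_def)
    have "dP v 1 i \<le> dP v 1 i1" using ii dP_add[of 1 i i1 v] dP_nonneg by simp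
    also have "\<dots> < dP v i1 n" using i1P by simp
    also have "\<dots> \<le> dP v i n" using ii i1P dP_add[of i i1 n v] dP_nonneg by simp
    finally show False using a by simp
  qed
  then have ji: "Suc i \<le> j" using Pj by (simp add: P_def)
  have "P (Suc i) j"
  proof -
    have "dist (v (Suc i)) (v j) + dP v j n \<le> dist (v (Suc i)) (v i) + dist (v i) (v j) + dP v j n"
      using dist_triangle[of "v (Suc i)" "v j" "v i"] by simp
    also have "\<dots> \<le> dist (v i) (v (Suc i)) + dP v 1 i" using Pj dist_commute[of "v (Suc i)" "v i"] unfolding P_def by linarith
    also have "\<dots> = dP v 1 (Suc i)" using Dstep ii by simp
    finally show ?thesis using ji Pj by (simp add: P_def)
  qed
  then have jj: "j' \<le> j" unfolding j'_def jf by (rule Least_le)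
  have "kfun v n (Suc i) \<le> kfun v n i"
  proof (cases "\<exists>k. Suc i \<le> k \<and> k \<le> j' \<and> dP v 1 (Suc i) < dist (v (Suc i)) (v j') + dP v j' k")
    case False
    have "kfun v n (Suc i) = 0"
      unfolding kfun_def Let_def j'_def[symmetric] using False by (rule if_not_P)
    then show ?thesis by simp
  next
    case True
    define k' where "k' = (GREATEST k. Suc i \<le> k \<and> k \<le> j' \<and> dP v 1 (Suc i) < dist (v (Suc i)) (v j') + dP v j' k)"
    have kk: "kfun v n (Suc i) = k'" unfolding kfun_def Let_def j'_def[symmetric] k'_def using True by (rule if_P)
    have k'P: "Suc i \<le> k' \<and> k' \<le> j' \<and> dP v 1 (Suc i) < dist (v (Suc i)) (v j') + dP v j' k'"
      unfolding k'_def
      by (rule GreatestI_ex_nat[where P="\<lambda>k. Suc i \<le> k \<and> k \<le> j' \<and> dP v 1 (Suc i) < dist (v (Suc i)) (v j') + dP v j' k" and b=j', OF True]) simp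
    have Q: "i \<le> k' \<and> k' \<le> j \<and> dP v 1 i < dist (v i) (v j) + dP v j k'"
    proof -
      have e1: "dP v j k' = dP v k' j' + dP v j' j"
        using k'P jj dP_sym[of v j k'] dP_add[of k' j' j v] by linarith
      have e2: "dP v j' k' = dP v k' j'" by (rule dP_sym)
      have t1: "dist (v (Suc i)) (v j') \<le> dist (v (Suc i)) (v i) + dist (v i) (v j) + dist (v j) (v j')"
        using dist_triangle[of "v (Suc i)" "v j'" "v i"] dist_triangle[of "v i" "v j'" "v j"] by simp
      have t2: "dist (v j) (v j') \<le> dP v j' j" using dist_le_dP[OF jj, of v] dist_commute[of "v j" "v j'"] by linarith
      have D: "dP v 1 (Suc i) = dP v 1 i + dist (v i) (v (Suc i))" using Dstep ii by simp
      show ?thesis using k'P jj e1 e2 t1 t2 D dist_commute[of "v (Suc i)" "v i"] ji by linarith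
    qed
    then have ex: "\<exists>k. i \<le> k \<and> k \<le> j \<and> dP v 1 i < dist (v i) (v j) + dP v j k" by blast
    have "kfun v n i = (GREATEST k. i \<le> k \<and> k \<le> j \<and> dP v 1 i < dist (v i) (v j) + dP v j k)"
      unfolding kfun_def Let_def j_def[symmetric] using ex by (rule if_P)
    moreover have "k' \<le> (GREATEST k. i \<le> k \<and> k \<le> j \<and> dP v 1 i < dist (v i) (v j) + dP v j k)"
      using Q by (rule Greatest_le_nat[where b=j]) simp
    ultimately show ?thesis using kk by simp
  qed
  then show "jfun v n (Suc i) \<le> jfun v n i \<and> kfun v n (Suc i) \<le> kfun v n i"
    using jj by (simp add: j_def j'_def)
qed

end
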